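(* Let $0\le\alpha\le\beta$ and let $q=(q_n)$, $q_n\in(0,1)$, satisfy $st-\lim_n q_n=1$, $st-\lim_n q_n^n=a$ $(a<1)$ and $st-\lim_n 1/[n]_{q_n}=0$. Then for every non-decreasing bounded continuous function $f$ on $[0,\infty)$, every $x\ge 0$ and every $n\in\mathbb N$, $$\big|\mathfrak{D}_n^{(\alpha,\beta)}(f;q_n;x)-f(x)\big|\le 2\,\omega\big(f;\sqrt{\delta_n(x)}\big),$$ where, writing $q=q_n$, $$\delta_n(x)=\left(\frac{[n]_q(q[n]_q+1)}{q([n]_q+\beta)^2}+1-\frac{2[n]_q}{[n]_q+\beta}\right)x^2+\left(\frac{[n]_q+q^2[n]_q-2\alpha\beta-2q\beta}{([n]_q+\beta)^2}\right)x+\frac{q^2(1+q)+2q\alpha+\alpha^2}{([n]_q+\beta)^2}.$$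
   Context: $q$-calculus notation, for $0<q<1$: $[n]_q=\frac{1-q^n}{1-q}$; $[k]_q!=[k]_q[k-1]_q\cdots[1]_q$ with $[0]_q!=1$; $\left[\begin{array}{c}n\\k\end{array}\right]_q=\frac{[n]_q!}{[k]_q!\,[n-k]_q!}$; $(1+x)_q^m=(1+x)(1+qx)\cdots(1+q^{m-1}x)$ with $(1+x)_q^0=1$. The $q$-exponential is $E_q(z)=\sum_{k=0}^\infty q^{k(k-1)/2}\frac{z^k}{[k]_q!}=\prod_{j=0}^\infty(1+(1-q)q^jz)$. The $q$-Jackson integral is $\int_0^a g(t)\,d_qt=(1-q)a\sum_{j=0}^\infty g(aq^j)q^j$. For $n\in\mathbb N$, $0<q<1$, $x\in[0,\infty)$ define $p^q_{n,k}(x)=\left[\begin{array}{c}n+k-1\\k\end{array}\right]_q q^{k(k-1)/2}\frac{x^k}{(1+x)_q^{n+k}}$ and $s^q_{n,k}(t)=E_q(-[n]_qt)\frac{([n]_qt)^k}{[k]_q!}$. The $q$-Baskakov–Szász–Stancu operators with parameters $0\le\alpha\le\beta$ are $$\mathfrak{D}_n^{(\alpha,\beta)}(f;q;x)=[n]_q\sum_{k=0}^\infty p^q_{n,k}(x)\int_0^{q/(1-q^n)} q^{-k-1}s^q_{n,k}(t)\, f\!\left(\frac{[n]_q t q^{-k}+\alpha}{[n]_q+\beta}\right)d_qt .$$ With $q=q_n$, $[n]_q$ means $[n]_{q_n}$. Statistical convergence: for $K\subseteq\mathbb N$, its natural density is $\delta(K)=\lim_n \frac1n|\{j\le n: j\in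 K\}|$ (if it exists). A real sequence $(x_j)$ is statistically convergent to $L$, written $st-\lim_n x_n=L$, if for every $\epsilon>0$, $\delta(\{j:|x_j-L|\ge\epsilon\})=0$. Modulus of continuity: for bounded continuous $f$ on $[0,\infty)$ and $\delta>0$, $\omega(f;\delta)=\sup\{|f(t)-f(x)|: t,x\in[0,\infty),\ |t-x|\le\delta\}$. *)

theory Defs
  imports "HOL-Analysis.Analysis"
begin

definition qint :: "real \<Rightarrow> nat \<Rightarrow> real" where
  "qint q n = (1 - q ^ n) / (1 - q)"

definition qfact :: "real \<Rightarrow> nat \<Rightarrow> real" where
  "qfact q k = (\<Prod>i\<in>{1..k}. qint q i)"

definition qbinom :: "real \<Rightarrow> nat \<Rightarrow> nat \<Rightarrow> real" where
  "qbinom q n k = qfact q n / (qfact q k * qfact q (n - k))"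

definition qpow1 :: "real \<Rightarrow> real \<Rightarrow> nat \<Rightarrow> real" where
  "qpow1 q x m = (\<Prod>j<m. (1 + q ^ j * x))"

definition qexp :: "real \<Rightarrow> real \<Rightarrow> real" where
  "qexp q z = (\<Sum>k. q ^ (k * (k - 1) div 2) * z ^ k / qfact q k)"

definition jackson_int :: "real \<Rightarrow> (real \<Rightarrow> real) \<Rightarrow> real \<Rightarrow> real" where
  "jackson_int q g a = (1 - q) * a * (\<Sum>j. g (a * q ^ j) * q ^ j)"

definition p_nk :: "real \<Rightarrow> nat \<Rightarrow> nat \<Rightarrow> real \<Rightarrow> real" where
  "p_nk q n k x = qbinom q (n + k - 1) k * q ^ (k * (k - 1) div 2) * x ^ k / qpow1 q x (n + k)"

definition s_nk :: "real \<Rightarrow> nat \<Rightarrow> nat \<Rightarrow> real \<Rightarrow> real" where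
  "s_nk q n k t = qexp q (- qint q n * t) * (qint q n * t) ^ k / qfact q k"

definition BSS :: "nat \<Rightarrow> real \<Rightarrow> real \<Rightarrow> (real \<Rightarrow> real) \<Rightarrow> real \<Rightarrow> real \<Rightarrow> real" where
  "BSS n \<alpha> \<beta> f q x = qint q n * (\<Sum>k. p_nk q n k x *
      jackson_int q (\<lambda>t. (1 / q ^ (k + 1)) * s_nk q n k t *
          f ((qint q n * t * (1 / q ^ k) + \<alpha>) / (qint q n + \<beta>))) (q / (1 - q ^ n)))"

definition st_lim :: "(nat \<Rightarrow> real) \<Rightarrow> real \<Rightarrow> bool" where
  "st_lim x L \<longleftrightarrow> (\<forall>\<epsilon>>0.
     (\<lambda>n. real (card {j\<in>{1..n}. \<bar>x j - L\<bar> \<ge> \<epsilon>}) / real n) \<longlonglongrightarrow> 0)"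

definition modcont :: "(real \<Rightarrow> real) \<Rightarrow> real \<Rightarrow> real" where
  "modcont f \<delta> = Sup {\<bar>f t - f x\<bar> | t x. t \<ge> 0 \<and> x \<ge> 0 \<and> \<bar>t - x\<bar> \<le> \<delta>}"

definition delta_n :: "real \<Rightarrow> nat \<Rightarrow> real \<Rightarrow> real \<Rightarrow> real \<Rightarrow> real" where
  "delta_n q n \<alpha> \<beta> x =
     (qint q n * (q * qint q n + 1) / (q * (qint q n + \<beta>)^2) + 1 - 2 * qint q n / (qint q n + \<beta>)) * x^2
   + ((qint q n + q^2 * qint q n - 2 * \<alpha> * \<beta> - 2 * q * \<beta>) / (qint q n + \<beta>)^2) * x
   + (q^2 * (1 + q) + 2 * q * \<alpha> + \<alpha>^2) / (qint q n + \<beta>)^2"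

end

theory Submission
  imports Defs
begin


lemma qint_ge1: "0 < q \<Longrightarrow> q < 1 \<Longrightarrow> 1 \<le> i \<Longrightarrow> 1 \<le> qint q i"
proof -
  assume q: "0 < q" "q < 1" "1 \<le> i"
  have "q ^ i \<le> q ^ 1" using q by (intro power_decreasing) auto
  then show ?thesis using q unfolding qint_def by (simp add: field_simps)
qed

lemma qint_le: "0 < q \<Longrightarrow> q < 1 \<Longrightarrow> qint q i \<le> 1 / (1 - q)"
  unfolding qint_def by (simp add: divide_right_mono)

lemma qint_mult: "q < 1 \<Longrightarrow> qint q i * (1 - q) = 1 - q ^ i"
proof -
  assume "q < 1" then have "1 - q \<noteq> 0" by simp
  then show ?thesis unfolding qint_def by simp
qed

lemma qfact_Suc: "qfact q (Suc k) = qfact q k * qint q (Suc k)"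
  unfolding qfact_def by (simp add: prod.atLeast1_atMost_eq prod.lessThan_Suc)

lemma qfact_ge1: "0 < q \<Longrightarrow> q < 1 \<Longrightarrow> 1 \<le> qfact q k"
  unfolding qfact_def by (intro prod_ge_1) (auto intro: qint_ge1)

lemma qfact_pos: "0 < q \<Longrightarrow> q < 1 \<Longrightarrow> 0 < qfact q k"
  using qfact_ge1[of q k] by linarith

lemma tri_Suc: "Suc k * (Suc k - 1) div 2 = k * (k - 1) div 2 + k"
proof -
  have "Suc k * (Suc k - 1) = k * (k - 1) + 2 * k" by (cases k) (auto simp: algebra_simps)
  then show ?thesis by simp
qed

lemma summable_qtri:
  fixes q c :: real
  assumes "0 < q" "q < 1"
  shows "summable (\<lambda>k. q ^ (k * (k - 1) div 2) * c ^ k)" (is "summable ?b")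
proof -
  have "(\<lambda>k. q ^ k * \<bar>c\<bar>) \<longlonglongrightarrow> 0 * \<bar>c\<bar>"
    by (intro tendsto_mult LIMSEQ_power_zero) (use assms in auto)
  then have "eventually (\<lambda>k. q ^ k * \<bar>c\<bar> < 1/2) sequentially"
    by (intro order_tendstoD) auto
  then obtain N where N: "\<And>k. k \<ge> N \<Longrightarrow> q ^ k * \<bar>c\<bar> < 1/2"
    by (auto simp: eventually_sequentially)
  show ?thesis
  proof (rule summable_ratio_test[of "1/2" N])
    fix k assume "N \<le> k"
    have "?b (Suc k) = (q ^ k * c) * ?b k"
      by (simp only: tri_Suc power_add power_Suc) (simp add: algebra_simps)
    then have "norm (?b (Suc k)) = (q ^ k * \<bar>c\<bar>) * norm (?b k)"
      using assms by (simp add: abs_mult)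
    also have "\<dots> \<le> 1/2 * norm (?b k)"
      using N[OF \<open>N \<le> k\<close>] by (intro mult_right_mono) auto
    finally show "norm (?b (Suc k)) \<le> 1/2 * norm (?b k)" .
  qed simp
qed

definition qa :: "real \<Rightarrow> real \<Rightarrow> nat \<Rightarrow> real" where
  "qa q z k = q ^ (k * (k - 1) div 2) * z ^ k / qfact q k"

lemma qexp_qa: "qexp q z = suminf (qa q z)"
  unfolding qexp_def qa_def ..

lemma summable_qa:
  assumes "0 < q" "q < 1"
  shows "summable (qa q z)"
proof (rule summable_comparison_test)
  show "summable (\<lambda>k. q ^ (k * (k - 1) div 2) * \<bar>z\<bar> ^ k)" by (rule summable_qtri[OF assms])
  show "\<exists>N. \<forall>n\<ge>N. norm (qa q z n) \<le> q ^ (n * (n - 1) div 2) * \<bar>z\<bar> ^ n"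
  proof (intro exI allI impI)
    fix n :: nat
    have "norm (qa q z n) = q ^ (n * (n - 1) div 2) * \<bar>z\<bar> ^ n / qfact q n"
      using assms qfact_pos[OF assms, of n] by (simp add: qa_def abs_mult power_abs)
    also have "\<dots> \<le> q ^ (n * (n - 1) div 2) * \<bar>z\<bar> ^ n"
      using assms qfact_ge1[OF assms, of n] divide_left_mono[of 1 "qfact q n" "q ^ (n * (n - 1) div 2) * \<bar>z\<bar> ^ n"] by simp
    finally show "norm (qa q z n) \<le> q ^ (n * (n - 1) div 2) * \<bar>z\<bar> ^ n" .
  qed
qed

lemma qexp_funeq:
  assumes q: "0 < q" "q < 1"
  shows "qexp q z = (1 + (1 - q) * z) * qexp q (q * z)"
proof -
  define d where "d k = qa q z k - qa q (q * z) k" for k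
  have dS: "d (Suc m) = (1 - q) * z * qa q (q * z) m" for m
  proof -
    have F: "qfact q (Suc m) = qfact q m * ((1 - q ^ Suc m) / (1 - q))" 
      unfolding qfact_Suc qint_def ..
    have "q ^ Suc m < 1" using q by (rule power_Suc_less_one)
    moreover have "qfact q m > 0" by (rule qfact_pos[OF q])
    ultimately have ne: "1 - q * q ^ m \<noteq> 0" "qfact q m \<noteq> 0" "1 - q \<noteq> 0" using q by auto
    have alg: "\<And>A t Fm w :: real. 1 - q * t \<noteq> 0 \<Longrightarrow> Fm \<noteq> 0 \<Longrightarrow> 1 - q \<noteq> 0 \<Longrightarrow>
        A * t * (z * w) / (Fm * ((1 - q * t) / (1 - q))) - A * t * (q * t * (z * w)) / (Fm * ((1 - q * t) / (1 - q)))
        = (1 - q) * z * (A * (t * w) / Fm)"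
    proof -
      fix A t Fm w :: real assume h: "1 - q * t \<noteq> 0" "Fm \<noteq> 0" "1 - q \<noteq> 0"
      have "A * t * (z * w) - A * t * (q * t * (z * w)) = (A * t * z * w) * (1 - q * t)"
        by (simp add: algebra_simps)
      moreover have "(A * t * z * w) * (1 - q * t) / (Fm * ((1 - q * t) / (1 - q))) = (1 - q) * z * (A * (t * w) / Fm)"
        using h by (simp add: field_simps)
      ultimately show "A * t * (z * w) / (Fm * ((1 - q * t) / (1 - q))) - A * t * (q * t * (z * w)) / (Fm * ((1 - q * t) / (1 - q)))
        = (1 - q) * z * (A * (t * w) / Fm)" by (metis diff_divide_distrib)
    qed
    show ?thesis
      unfolding d_def qa_def tri_Suc F power_add power_mult_distrib power_Suc
      using alg[where A="q ^ (m * (m - 1) div 2)" and t="q ^ m" and Fm="qfact q m" and w="z ^ m", OF ne] by (simp add: ac_simps)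
  qed
  have "(\<lambda>m. d (Suc m)) sums ((1 - q) * z * qexp q (q * z))"
    unfolding dS qexp_qa by (intro sums_mult summable_sums summable_qa q)
  then have "d sums ((1 - q) * z * qexp q (q * z) + d 0)"
    by (simp only: sums_Suc_iff)
  moreover have "d 0 = 0" by (simp add: d_def qa_def)
  ultimately have "d sums ((1 - q) * z * qexp q (q * z))" by simp
  moreover have "d sums (qexp q z - qexp q (q * z))"
    unfolding d_def qexp_qa by (intro sums_diff summable_sums summable_qa q)
  ultimately have "qexp q z - qexp q (q * z) = (1 - q) * z * qexp q (q * z)"
    using sums_unique2 by blast
  then show ?thesis by (simp add: algebra_simps)
qed

lemma qexp_cont0:
  assumes q: "0 < q" "q < 1"
  shows "isCont (qexp q) 0" and "qexp q 0 = 1"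
proof -
  define c where "c k = q ^ (k * (k - 1) div 2) / qfact q k" for k
  have eq: "qexp q = (\<lambda>z. \<Sum>k. c k * z ^ k)"
    by (rule ext) (simp add: qexp_def c_def)
  have "summable (\<lambda>k. c k * 1 ^ k)"
    using summable_qa[OF q, of 1] unfolding qa_def c_def by simp
  then show "isCont (qexp q) 0" unfolding eq by (rule isCont_powser) simp
  show "qexp q 0 = 1" unfolding eq using powser_zero[of c] by (simp add: c_def qfact_def)
qed




definition ee :: "real \<Rightarrow> nat \<Rightarrow> real" where
  "ee q j = qexp q (- (q ^ Suc j / (1 - q)))"

definition PP :: "real \<Rightarrow> nat \<Rightarrow> real" where
  "PP q k = (\<Prod>i\<in>{1..k}. (1 - q ^ i))"

lemma PP_Suc: "PP q (Suc k) = PP q k * (1 - q ^ Suc k)"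
  unfolding PP_def by (simp add: prod.atLeast1_atMost_eq prod.lessThan_Suc)

lemma PP_pos: "0 < q \<Longrightarrow> q < 1 \<Longrightarrow> 0 < PP q k"
  unfolding PP_def by (intro prod_pos) (auto simp: power_less_one_iff)

context
  fixes q :: real
  assumes q: "0 < q" "q < 1"
begin

lemma ee_rec: "ee q j = (1 - q ^ Suc j) * ee q (Suc j)"
proof -
  have "ee q j = (1 + (1 - q) * (- (q ^ Suc j / (1 - q)))) * qexp q (q * (- (q ^ Suc j / (1 - q))))"
    unfolding ee_def by (rule qexp_funeq[OF q])
  also have "(1 + (1 - q) * (- (q ^ Suc j / (1 - q)))) = 1 - q ^ Suc j" using q by simp
  also have "q * (- (q ^ Suc j / (1 - q))) = - (q ^ Suc (Suc j) / (1 - q))" by simp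
  finally show ?thesis unfolding ee_def .
qed

lemma ee_lim: "ee q \<longlonglongrightarrow> 1"
proof -
  have "(\<lambda>j. q ^ j) \<longlonglongrightarrow> 0" using q by (intro LIMSEQ_power_zero) auto
  then have "(\<lambda>j. q ^ Suc j) \<longlonglongrightarrow> 0" by (rule LIMSEQ_Suc)
  then have "(\<lambda>j. - (q ^ Suc j / (1 - q))) \<longlonglongrightarrow> - (0 / (1 - q))"
    by (intro tendsto_intros) (use q in auto)
  then have "(\<lambda>j. qexp q (- (q ^ Suc j / (1 - q)))) \<longlonglongrightarrow> qexp q 0"
    using qexp_cont0(1)[OF q] by (intro isCont_tendsto_compose[where g="qexp q"]) auto
  then show ?thesis unfolding ee_def qexp_cont0(2)[OF q] .
qed

lemma ee_pos: "0 < ee q j"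
proof -
  have "eventually (\<lambda>j. ee q j > 0) sequentially"
    using ee_lim by (intro order_tendstoD) auto
  then obtain J where J: "\<And>j. j \<ge> J \<Longrightarrow> ee q j > 0" by (auto simp: eventually_sequentially)
  have "ee q j > 0" if "j \<le> max J j" for j
    using that
  proof (induction j rule: inc_induct)
    case base then show ?case using J by simp
  next
    case (step m)
    have "1 - q ^ Suc m > 0" using q power_Suc_less_one[of q m] by simp
    then show ?case using step.IH ee_rec[of m] by simp
  qed
  then show ?thesis by simp
qed

lemma ee_bounded: obtains K where "K > 0" "\<And>j. \<bar>ee q j\<bar> \<le> K"
proof -
  have "Bseq (ee q)" using ee_lim by (intro convergent_imp_Bseq) (auto simp: convergent_def)
  then obtain K where K: "K > 0" "\<And>n. norm (ee q n) \<le> K" by (auto simp: Bseq_def)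
  show ?thesis by (rule that[OF K(1)]) (use K(2) in auto)
qed

lemma summable_T: "m \<ge> 1 \<Longrightarrow> summable (\<lambda>j. q ^ (j * m) * ee q j)"
proof -
  assume m: "m \<ge> 1"
  obtain K where K: "K > 0" "\<And>j. \<bar>ee q j\<bar> \<le> K" by (metis ee_bounded)
  have qm: "q ^ m < 1" using q m by (simp add: power_less_one_iff)
  show ?thesis
  proof (rule summable_comparison_test)
    show "summable (\<lambda>j. K * (q ^ m) ^ j)"
      using qm q by (intro summable_mult summable_geometric) auto
    show "\<exists>N. \<forall>n\<ge>N. norm (q ^ (n * m) * ee q n) \<le> K * (q ^ m) ^ n"
      using K q by (intro exI[of _ 0] allI impI)
        (simp add: abs_mult power_mult[symmetric] mult.commute mult_left_mono)
  qed
qed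

lemma T1: "(\<lambda>j. q ^ j * ee q j) sums 1"
proof -
  have "(\<lambda>j. ee q (Suc j) - ee q j) sums (1 - ee q 0)"
    by (rule telescope_sums[OF ee_lim])
  moreover have "ee q (Suc j) - ee q j = q ^ Suc j * ee q (Suc j)" for j
    using ee_rec[of j] by (simp add: algebra_simps)
  ultimately have "(\<lambda>j. q ^ Suc j * ee q (Suc j)) sums (1 - ee q 0)" by simp
  then have "(\<lambda>j. q ^ j * ee q j) sums (1 - ee q 0 + q ^ 0 * ee q 0)"
    using sums_Suc_iff[of "\<lambda>j. q ^ j * ee q j"] by simp
  then show ?thesis by simp
qed

lemma Tstep:
  assumes m: "m \<ge> 1" and t: "(\<lambda>j. q ^ (j * m) * ee q j) sums t"
  shows "(\<lambda>j. q ^ (j * Suc m) * ee q j) sums ((1 - q ^ m) * t)"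
proof -
  obtain t' where t': "(\<lambda>j. q ^ (j * Suc m) * ee q j) sums t'"
    using summable_T[of "Suc m"] by (auto simp: summable_def)
  have "(\<lambda>j. q ^ m * (q ^ (j * m) * ee q j)) sums (q ^ m * t)"
    by (rule sums_mult[OF t])
  moreover have "q ^ m * (q ^ (j * m) * ee q j) =
      q ^ (Suc j * m) * ee q (Suc j) - q ^ (Suc j * Suc m) * ee q (Suc j)" for j
    by (subst ee_rec[of j]) (simp add: algebra_simps power_add power_mult)
  ultimately have A: "(\<lambda>j. q ^ (Suc j * m) * ee q (Suc j) - q ^ (Suc j * Suc m) * ee q (Suc j)) sums (q ^ m * t)"
    by simp
  have s1: "(\<lambda>j. q ^ (Suc j * m) * ee q (Suc j)) sums (t - q ^ (0 * m) * ee q 0)"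
    using t by (subst sums_Suc_iff) simp
  have s2: "(\<lambda>j. q ^ (Suc j * Suc m) * ee q (Suc j)) sums (t' - q ^ (0 * Suc m) * ee q 0)"
    using t' by (subst sums_Suc_iff) simp
  have "(\<lambda>j. q ^ (Suc j * m) * ee q (Suc j) - q ^ (Suc j * Suc m) * ee q (Suc j))
      sums ((t - ee q 0) - (t' - ee q 0))"
    using sums_diff[OF s1 s2] by simp
  with A have "q ^ m * t = t - t'" using sums_unique2 by fastforce
  then have "t' = (1 - q ^ m) * t" by (simp add: algebra_simps)
  with t' show ?thesis by simp
qed

lemma Tk: "(\<lambda>j. q ^ (j * Suc k) * ee q j) sums PP q k"
proof (induction k)
  case 0 then show ?case using T1 by (simp add: PP_def)
next
  case (Suc k)
  from Tstep[OF _ Suc] have "(\<lambda>j. q ^ (j * Suc (Suc k)) * ee q j) sums ((1 - q ^ Suc k) * PP q k)"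
    by simp
  then show ?case by (simp add: PP_Suc mult.commute)
qed

end



lemma qpow1_Suc: "qpow1 q x (Suc m) = qpow1 q x m * (1 + q ^ m * x)"
  unfolding qpow1_def by simp

lemma qpow1_pos: "0 < q \<Longrightarrow> 0 \<le> x \<Longrightarrow> 0 < qpow1 q x m"
  unfolding qpow1_def by (intro prod_pos) (auto intro: add_pos_nonneg)

lemma qbinom_eq: "qbinom q (m + k) k = qfact q (m + k) / (qfact q k * qfact q m)"
  unfolding qbinom_def by simp

lemma p_alt: "p_nk q (Suc m) k x = qfact q (m + k) / (qfact q k * qfact q m) * q ^ (k * (k - 1) div 2) * x ^ k / qpow1 q x (Suc (m + k))"
  unfolding p_nk_def by (simp add: qbinom_eq)

context
  fixes q x :: real
  assumes q: "0 < q" "q < 1" and x: "0 \<le> x"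
begin

lemma p_nonneg: "0 \<le> p_nk q n k x"
  unfolding p_nk_def qbinom_def using qfact_pos[OF q] qfact_pos[OF q, THEN less_imp_le] qpow1_pos[OF q(1) x] x q
  by (intro divide_nonneg_pos mult_nonneg_nonneg mult_pos_pos) auto

lemma p_zero: "p_nk q (Suc m) 0 x = 1 / qpow1 q x (Suc m)"
proof -
  have "qfact q 0 = 1" by (simp add: qfact_def)
  then show ?thesis unfolding p_alt using qfact_pos[OF q, of m] by simp
qed

lemma p_ratio: "p_nk q (Suc m) (Suc k) x = p_nk q (Suc m) k x * (qint q (Suc (m + k)) / qint q (Suc k)) * (q ^ k * x / (1 + q ^ Suc (m + k) * x))"
proof -
  have I: "qint q (Suc (m + k)) > 0" "qint q (Suc k) > 0"
    using qint_ge1[OF q] by (auto intro: less_le_trans[OF zero_less_one])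
  have F: "qfact q k > 0" "qfact q m > 0" "qfact q (m + k) > 0" using qfact_pos[OF q] by auto
  have "0 \<le> q ^ Suc (m + k) * x" using q x by simp
  then have Q: "qpow1 q x (Suc (m + k)) > 0" "1 + q * q ^ (m + k) * x > 0" using qpow1_pos[OF q(1) x] by auto
  have alg: "\<And>G Fk Fm Ik In A t X Qp D :: real. Fk \<noteq> 0 \<Longrightarrow> Fm \<noteq> 0 \<Longrightarrow> Ik \<noteq> 0 \<Longrightarrow> In \<noteq> 0 \<Longrightarrow> Qp \<noteq> 0 \<Longrightarrow> D \<noteq> 0 \<Longrightarrow>
     G * In / (Fk * Ik * Fm) * (A * t) * (x * X) / (Qp * D) = G / (Fk * Fm) * A * X / Qp * (In / Ik) * (t * x / D)"
    by (simp add: field_simps)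
  show ?thesis
    unfolding p_alt add_Suc_right qfact_Suc qpow1_Suc tri_Suc power_add power_Suc
    using alg[where G="qfact q (m+k)" and Fk="qfact q k" and Fm="qfact q m" and Ik="qint q (Suc k)"
      and In="qint q (Suc (m+k))" and A="q ^ (k * (k - 1) div 2)" and t="q^k" and X="x^k"
      and Qp="qpow1 q x (Suc (m + k))" and D="1 + q * q ^ (m+k) * x"] I F Q
    by (simp add: ac_simps)
qed

lemma qpk_lt: "q * q ^ j < 1" "q * (q * q ^ j) < 1"
proof -
  have "q ^ Suc j < 1" "q ^ Suc (Suc j) < 1" using power_Suc_less_one[OF q] by blast+
  then show "q * q ^ j < 1" "q * (q * q ^ j) < 1" by auto
qed

lemma qint_Suc_nz: "qint q (Suc i) \<noteq> 0"
  using qint_ge1[OF q, of "Suc i"] by simp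

lemma p_falling: "(1 - q ^ Suc k) * p_nk q (Suc m) (Suc k) x = (1 - q ^ Suc m) * x * q ^ k * p_nk q (Suc (Suc m)) k x"
proof -
  have F: "qfact q k \<noteq> 0" "qfact q m \<noteq> 0" "qfact q (m + k) \<noteq> 0" using qfact_pos[OF q] by (auto simp: less_imp_neq[symmetric])
  have I: "qint q (Suc k) \<noteq> 0" "qint q (Suc m) \<noteq> 0" "qint q (Suc (m + k)) \<noteq> 0"
    by (simp_all add: qint_Suc_nz)
  have Q: "qpow1 q x (Suc (Suc (m + k))) \<noteq> 0" using qpow1_pos[OF q(1) x] by (metis less_irrefl)
  show ?thesis
    apply (subst qint_mult[OF q(2), symmetric])+
    unfolding p_alt add_Suc_right add_Suc qfact_Suc tri_Suc
    using F I Q by (simp add: field_simps power_add)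
qed

lemma qint_pascal: "qint q (Suc (Suc (m + k))) = qint q (Suc m) + q ^ Suc m * qint q (Suc k)"
  unfolding qint_def using q by (simp add: field_simps power_add)

lemma p_rec: "p_nk q (Suc (Suc m)) (Suc k) x * (1 + q ^ Suc (Suc (m + k)) * x) = p_nk q (Suc m) (Suc k) x + q ^ Suc (m + k) * x * p_nk q (Suc (Suc m)) k x"
proof -
  have F: "qfact q k \<noteq> 0" "qfact q m \<noteq> 0" "qfact q (m + k) \<noteq> 0" using qfact_pos[OF q] by (auto simp: less_imp_neq[symmetric])
  have I: "qint q (Suc k) \<noteq> 0" "qint q (Suc m) \<noteq> 0" "qint q (Suc (m + k)) \<noteq> 0"
    by (simp_all add: qint_Suc_nz)
  have "0 \<le> q ^ Suc (Suc (m + k)) * x" using q x by simp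
  then have Q: "qpow1 q x (Suc (Suc (m + k))) \<noteq> 0" "1 + q ^ Suc (Suc (m + k)) * x \<noteq> 0"
    using qpow1_pos[OF q(1) x] by (metis less_irrefl, linarith)
  have e1: "qpow1 q x (Suc (Suc (Suc (m + k)))) = qpow1 q x (Suc (Suc (m + k))) * (1 + q ^ Suc (Suc (m + k)) * x)"
    by (rule qpow1_Suc)
  have e2: "qfact q (Suc (Suc (m + k))) = qfact q (m + k) * qint q (Suc (m + k)) * (qint q (Suc m) + q ^ Suc m * qint q (Suc k))"
    unfolding qfact_Suc[of q "Suc (m+k)"] qfact_Suc[of q "m+k"] qint_pascal ..
  have alg: "\<And>G Ink Im Ik Fk Fm a b A X P E :: real. G \<noteq> 0 \<Longrightarrow> Ink \<noteq> 0 \<Longrightarrow> Im \<noteq> 0 \<Longrightarrow> Ik \<noteq> 0 \<Longrightarrow> Fk \<noteq> 0 \<Longrightarrow> Fm \<noteq> 0 \<Longrightarrow> P \<noteq> 0 \<Longrightarrow> E \<noteq> 0 \<Longrightarrow>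
    G*Ink*(Im + q*a*Ik)/(Fk*Ik*(Fm*Im)) * (A*b) * (x*X) / (P*E) * E
    = G*Ink/(Fk*Ik*Fm) * (A*b) * (x*X)/P + q*(a*b)*x * (G*Ink/(Fk*(Fm*Im)) * A * X / P)"
    by (simp add: field_simps)
  show ?thesis
    unfolding p_alt add_Suc_right add_Suc e1 e2
    unfolding qfact_Suc tri_Suc power_Suc power_add
    using alg[where G="qfact q (m+k)" and Ink="qint q (Suc (m+k))" and Im="qint q (Suc m)" and Ik="qint q (Suc k)"
       and Fk="qfact q k" and Fm="qfact q m" and a="q^m" and b="q^k" and A="q ^ (k * (k - 1) div 2)" and X="x^k"
       and P="qpow1 q x (Suc (Suc (m + k)))" and E="1 + q * (q * (q ^ m * q ^ k)) * x"]
      F I Q by (simp add: ac_simps power_add)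
qed

lemma p_rec0: "p_nk q (Suc (Suc m)) 0 x * (1 + q ^ Suc m * x) = p_nk q (Suc m) 0 x"
proof -
  have "0 \<le> q ^ Suc m * x" using q x by simp
  then have "1 + q ^ Suc m * x \<noteq> 0" by auto
  then show ?thesis unfolding p_zero qpow1_Suc[of q x "Suc m"] using qpow1_pos[OF q(1) x, of "Suc m"] by simp
qed

end



context
  fixes q x :: real
  assumes q: "0 < q" "q < 1" and x: "0 \<le> x"
begin

lemma p_ratio_le: "p_nk q (Suc m) (Suc k) x \<le> (q ^ k * x / (1 - q)) * p_nk q (Suc m) k x"
proof -
  have I1: "qint q (Suc (m + k)) \<le> 1 / (1 - q)" by (rule qint_le[OF q])
  have I2: "1 \<le> qint q (Suc k)" by (rule qint_ge1[OF q]) simp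
  have I0: "0 \<le> qint q (Suc (m + k))" using qint_ge1[OF q, of "Suc (m+k)"] by simp
  have R1: "qint q (Suc (m + k)) / qint q (Suc k) \<le> (1 / (1 - q)) / 1"
    using I1 I2 I0 q by (intro frac_le) auto
  have R1': "0 \<le> qint q (Suc (m + k)) / qint q (Suc k)" using I0 I2 by simp
  have t: "0 \<le> q ^ Suc (m + k) * x" using q x by simp
  have R2: "q ^ k * x / (1 + q ^ Suc (m + k) * x) \<le> (q ^ k * x) / 1"
    using q x t by (intro frac_le) auto
  have R2': "0 \<le> q ^ k * x / (1 + q ^ Suc (m + k) * x)" using q x t by simp
  have P: "0 \<le> p_nk q (Suc m) k x" by (rule p_nonneg[OF q x])
  have "p_nk q (Suc m) (Suc k) x = p_nk q (Suc m) k x * (qint q (Suc (m + k)) / qint q (Suc k)) * (q ^ k * x / (1 + q ^ Suc (m + k) * x))"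
    by (rule p_ratio[OF q x])
  also have "\<dots> \<le> p_nk q (Suc m) k x * (1 / (1 - q)) * (q ^ k * x)"
    using R1 R1' R2 R2' P q by (intro mult_mono) auto
  finally show ?thesis by (simp add: field_simps)
qed

lemma summable_pw: "summable (\<lambda>k. (1 / q) ^ (c * k) * p_nk q (Suc m) k x)" (is "summable ?a")
proof -
  have "(\<lambda>k. (1 / q) ^ c * (q ^ k * x / (1 - q))) \<longlonglongrightarrow> (1 / q) ^ c * (0 * x / (1 - q))"
    using q by (intro tendsto_intros LIMSEQ_power_zero) auto
  then have "eventually (\<lambda>k. (1 / q) ^ c * (q ^ k * x / (1 - q)) < 1/2) sequentially"
    by (intro order_tendstoD) auto
  then obtain N where N: "\<And>k. k \<ge> N \<Longrightarrow> (1 / q) ^ c * (q ^ k * x / (1 - q)) < 1/2"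
    by (auto simp: eventually_sequentially)
  show ?thesis
  proof (rule summable_ratio_test[of "1/2" N])
    fix k assume k: "N \<le> k"
    have pos: "0 \<le> (1 / q) ^ (c * k)" "0 \<le> (1 / q) ^ c" using q by simp_all
    have "norm (?a (Suc k)) = (1 / q) ^ c * ((1 / q) ^ (c * k) * p_nk q (Suc m) (Suc k) x)"
      using p_nonneg[OF q x] pos by (simp add: power_add mult_ac)
    also have "\<dots> \<le> (1 / q) ^ c * ((1 / q) ^ (c * k) * ((q ^ k * x / (1 - q)) * p_nk q (Suc m) k x))"
      using p_ratio_le pos by (intro mult_left_mono) auto
    also have "\<dots> = ((1 / q) ^ c * (q ^ k * x / (1 - q))) * norm (?a k)"
      using p_nonneg[OF q x] pos by (simp add: mult_ac)
    also have "\<dots> \<le> 1/2 * norm (?a k)"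
      using N[OF k] by (intro mult_right_mono) auto
    finally show "norm (?a (Suc k)) \<le> 1/2 * norm (?a k)" .
  qed simp
qed

lemma summable_p: "summable (\<lambda>k. p_nk q (Suc m) k x)"
  using summable_pw[of 0 m] by simp

end



context
  fixes q x :: real
  assumes q: "0 < q" "q < 1" and x: "0 \<le> x"
begin

lemma S0_base: "(\<lambda>k. p_nk q (Suc 0) k x) sums 1"
proof -
  define r where "r k = q ^ (k * (k - 1) div 2) * x ^ k / qpow1 q x k" for k
  have Qp: "qpow1 q x k \<ge> 1" for k
    unfolding qpow1_def using q x by (intro prod_ge_1) auto
  have r_nonneg: "0 \<le> r k" for k unfolding r_def using q x Qp[of k] by simp
  have r_le: "r k \<le> q ^ (k * (k - 1) div 2) * x ^ k" for k
  proof -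
    have "r k = (q ^ (k * (k - 1) div 2) * x ^ k) / qpow1 q x k" by (simp add: r_def)
    also have "\<dots> \<le> (q ^ (k * (k - 1) div 2) * x ^ k) / 1"
      using q x Qp[of k] by (intro frac_le) auto
    finally show ?thesis by simp
  qed
  have "(\<lambda>k. q ^ (k * (k - 1) div 2) * x ^ k) \<longlonglongrightarrow> 0"
    by (rule summable_LIMSEQ_zero[OF summable_qtri[OF q]])
  then have rlim: "r \<longlonglongrightarrow> 0"
    using r_nonneg r_le
    by (intro tendsto_sandwich[of "\<lambda>_. 0" r sequentially "\<lambda>k. q ^ (k * (k - 1) div 2) * x ^ k"]) auto
  have "(\<lambda>k. r k - r (Suc k)) sums (r 0 - 0)" by (rule telescope_sums'[OF rlim])
  moreover have "r 0 = 1" by (simp add: r_def qpow1_def)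
  moreover have "r k - r (Suc k) = p_nk q (Suc 0) k x" for k
  proof -
    have "0 \<le> q ^ k * x" using q x by simp
    then have ne: "1 + q ^ k * x \<noteq> 0" by linarith
    have ne2: "qpow1 q x k \<noteq> 0" using Qp[of k] by linarith
    have f0: "qfact q 0 = 1" by (simp add: qfact_def)
    have fk: "qfact q k \<noteq> 0" using qfact_pos[OF q, of k] by simp
    have alg: "\<And>A X b F Qk :: real. 1 + b * x \<noteq> 0 \<Longrightarrow> Qk \<noteq> 0 \<Longrightarrow> F \<noteq> 0 \<Longrightarrow>
       A * X / Qk - A * b * (x * X) / (Qk * (1 + b * x)) = F / (F * 1) * A * X / (Qk * (1 + b * x))"
    proof -
      fix A X b F Qk :: real assume h: "1 + b * x \<noteq> 0" "Qk \<noteq> 0" "F \<noteq> 0"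
      define E where "E = 1 + b * x"
      have hE: "E \<noteq> 0" using h(1) by (simp add: E_def)
      have "A * X / Qk - A * b * (x * X) / (Qk * E) = (A * X * E - A * b * (x * X)) / (Qk * E)"
        using hE h(2) by (simp add: field_simps)
      also have "A * X * E - A * b * (x * X) = A * X" by (simp add: E_def algebra_simps)
      finally show "A * X / Qk - A * b * (x * X) / (Qk * (1 + b * x)) = F / (F * 1) * A * X / (Qk * (1 + b * x))"
        using h(3) by (simp add: E_def)
    qed
    show ?thesis
      unfolding r_def p_alt qpow1_Suc tri_Suc f0 power_add power_Suc add_0
      using alg[where A="q ^ (k * (k - 1) div 2)" and X="x^k" and b="q^k" and F="qfact q k" and Qk="qpow1 q x k"] ne ne2 fk
      by (simp add: mult_ac)
  qed
  ultimately show ?thesis by simp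
qed

lemma S0: "(\<lambda>k. p_nk q (Suc m) k x) sums 1"
proof (induction m)
  case 0 then show ?case by (rule S0_base)
next
  case (Suc m)
  define a where "a k = p_nk q (Suc (Suc m)) k x" for k
  define b where "b k = q ^ Suc (m + k) * x * a k" for k
  define b' where "b' k = (case k of 0 \<Rightarrow> 0 | Suc j \<Rightarrow> b j)" for k
  have sa: "summable a" unfolding a_def by (rule summable_p[OF q x])
  have sb: "summable b"
  proof (rule summable_comparison_test[OF _ summable_mult[OF sa, of x]])
    show "\<exists>N. \<forall>n\<ge>N. norm (b n) \<le> x * a n"
    proof (intro exI allI impI)
      fix n :: nat
      have an: "0 \<le> a n" unfolding a_def by (rule p_nonneg[OF q x])
      have "q ^ Suc (m + n) \<le> 1" by (rule power_le_one) (use q in auto)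
      then have "q ^ Suc (m + n) * (x * a n) \<le> 1 * (x * a n)"
        using an x by (intro mult_right_mono) auto
      then show "norm (b n) \<le> x * a n" unfolding b_def using an x q by (simp add: abs_mult mult_ac)
    qed
  qed
  have "(\<lambda>k. b' (Suc k)) sums suminf b" unfolding b'_def using sb by (simp add: summable_sums)
  then have "b' sums (suminf b + b' 0)" using sums_Suc_iff[of b'] by simp
  then have sb': "b' sums suminf b" by (simp add: b'_def)
  have eq: "a k + b k = p_nk q (Suc m) k x + b' k" for k
  proof (cases k)
    case 0
    have "a 0 * (1 + q ^ Suc m * x) = p_nk q (Suc m) 0 x" unfolding a_def by (rule p_rec0[OF q x])
    then show ?thesis using 0 unfolding b_def b'_def by (simp add: algebra_simps)
  next
    case (Suc j)
    have "a (Suc j) * (1 + q ^ Suc (Suc (m + j)) * x) = p_nk q (Suc m) (Suc j) x + q ^ Suc (m + j) * x * a j"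
      unfolding a_def by (rule p_rec[OF q x])
    then show ?thesis using Suc unfolding b_def b'_def by (simp add: algebra_simps)
  qed
  have "(\<lambda>k. a k + b k) sums (suminf a + suminf b)"
    using sa sb by (intro sums_add summable_sums)
  moreover have "(\<lambda>k. a k + b k) sums (1 + suminf b)"
    unfolding eq by (intro sums_add Suc.IH sb')
  ultimately have "suminf a = 1" using sums_unique2 by fastforce
  then show ?case using sa unfolding a_def by (metis summable_sums)
qed

lemma Bstep:
  assumes s0: "(\<lambda>k. (1 / q) ^ (c * k) * p_nk q (Suc m) k x) sums s0"
    and s1: "(\<lambda>k. (1 / q) ^ (c * k) * p_nk q (Suc (Suc m)) k x) sums s1"
  shows "(\<lambda>k. (1 / q) ^ (Suc c * k) * p_nk q (Suc m) k x) sums (s0 + (1 / q) ^ Suc c * (1 - q ^ Suc m) * x * s1)"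
proof -
  have pw: "(1 / q) ^ (c * n) = (1 / q) ^ (Suc c * n) * q ^ n" for n
  proof -
    have "(1 / q) ^ (Suc c * n) * q ^ n = (1 / q) ^ (c * n) * ((1 / q) ^ n * q ^ n)"
      by (simp add: power_add mult_ac)
    also have "(1 / q) ^ n * q ^ n = 1" using q by (simp add: power_mult_distrib[symmetric])
    finally show ?thesis by simp
  qed
  define d where "d k = (1 / q) ^ (Suc c * k) * p_nk q (Suc m) k x - (1 / q) ^ (c * k) * p_nk q (Suc m) k x" for k
  have dS: "d (Suc j) = (1 / q) ^ Suc c * (1 - q ^ Suc m) * x * ((1 / q) ^ (c * j) * p_nk q (Suc (Suc m)) j x)" for j
  proof -
    have "d (Suc j) = (1 / q) ^ (Suc c * Suc j) * ((1 - q ^ Suc j) * p_nk q (Suc m) (Suc j) x)"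
      unfolding d_def pw[of "Suc j"] by (simp add: algebra_simps)
    also have "\<dots> = (1 / q) ^ (Suc c * Suc j) * ((1 - q ^ Suc m) * x * q ^ j * p_nk q (Suc (Suc m)) j x)"
      by (simp only: p_falling[OF q x])
    also have "(1 / q) ^ (Suc c * Suc j) = (1 / q) ^ Suc c * (1 / q) ^ (Suc c * j)"
      by (simp add: power_add)
    finally show ?thesis unfolding pw[of j] by (simp add: mult_ac)
  qed
  have "(\<lambda>j. d (Suc j)) sums ((1 / q) ^ Suc c * (1 - q ^ Suc m) * x * s1)"
    unfolding dS by (intro sums_mult s1)
  then have "d sums ((1 / q) ^ Suc c * (1 - q ^ Suc m) * x * s1 + d 0)"
    using sums_Suc_iff[of d] by simp
  then have "d sums ((1 / q) ^ Suc c * (1 - q ^ Suc m) * x * s1)"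
    by (simp add: d_def)
  then have "(\<lambda>k. d k + (1 / q) ^ (c * k) * p_nk q (Suc m) k x) sums ((1 / q) ^ Suc c * (1 - q ^ Suc m) * x * s1 + s0)"
    by (intro sums_add s0)
  then show ?thesis by (simp add: d_def add.commute)
qed

lemma S1: "(\<lambda>k. (1 / q) ^ k * p_nk q (Suc m) k x) sums (1 + (1 - q ^ Suc m) * x / q)"
  using Bstep[of 0 m 1 1] S0[of m] S0[of "Suc m"] by simp

lemma S2: "(\<lambda>k. (1 / q) ^ (2 * k) * p_nk q (Suc m) k x) sums
   ((1 + (1 - q ^ Suc m) * x / q) + (1 - q ^ Suc m) * x / q ^ 2 * (1 + (1 - q ^ Suc (Suc m)) * x / q))"
proof -
  have a: "(\<lambda>k. (1 / q) ^ (1 * k) * p_nk q (Suc m) k x) sums (1 + (1 - q ^ Suc m) * x / q)"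
    using S1[of m] by simp
  have b: "(\<lambda>k. (1 / q) ^ (1 * k) * p_nk q (Suc (Suc m)) k x) sums (1 + (1 - q ^ Suc (Suc m)) * x / q)"
    using S1[of "Suc m"] by simp
  show ?thesis using Bstep[OF a b] by (simp add: power2_eq_square mult_ac mult_2_right)
qed

end



definition WW :: "real \<Rightarrow> nat \<Rightarrow> nat \<Rightarrow> real" where
  "WW q k j = q ^ (j * Suc k) * ee q j / PP q k"

definition vv :: "real \<Rightarrow> nat \<Rightarrow> nat \<Rightarrow> real" where
  "vv q k j = q ^ Suc j / (1 - q) * (1 / q ^ k)"

context
  fixes q :: real
  assumes q: "0 < q" "q < 1"
begin

lemma PP_qfact: "PP q k = qfact q k * (1 - q) ^ k"
proof (induction k)
  case 0 then show ?case by (simp add: PP_def qfact_def)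
next
  case (Suc k)
  then show ?case using qint_mult[OF q(2), of "Suc k"] by (simp add: PP_Suc qfact_Suc mult_ac)
qed

lemma WW_pos: "0 < WW q k j"
  unfolding WW_def using ee_pos[OF q] PP_pos[OF q] q by simp

lemma I0: "(\<lambda>j. WW q k j) sums 1"
proof -
  have "(\<lambda>j. q ^ (j * Suc k) * ee q j / PP q k) sums (PP q k / PP q k)"
    by (intro sums_divide Tk[OF q])
  then show ?thesis using PP_pos[OF q, of k] by (simp add: WW_def)
qed

lemma I1: "(\<lambda>j. WW q k j * vv q k j) sums (q / (1 - q) * ((1 / q) ^ k - q))"
proof -
  have "(\<lambda>j. q ^ (j * Suc (Suc k)) * ee q j * (q / ((1 - q) * q ^ k * PP q k))) sums (PP q (Suc k) * (q / ((1 - q) * q ^ k * PP q k)))"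
    by (intro sums_mult2 Tk[OF q])
  moreover have "WW q k j * vv q k j = q ^ (j * Suc (Suc k)) * ee q j * (q / ((1 - q) * q ^ k * PP q k))" for j
    unfolding WW_def vv_def using q PP_pos[OF q, of k] by (simp add: field_simps power_add)
  moreover have "PP q (Suc k) * (q / ((1 - q) * q ^ k * PP q k)) = q / (1 - q) * ((1 / q) ^ k - q)"
    unfolding PP_Suc using q PP_pos[OF q, of k] by (simp add: field_simps power_add)
  ultimately show ?thesis by simp
qed

lemma I2: "(\<lambda>j. WW q k j * (vv q k j)^2) sums ((q / (1 - q))^2 * ((1 / q) ^ (2 * k) - (q + q^2) * (1 / q) ^ k + q ^ 3))"
proof -
  have "(\<lambda>j. q ^ (j * Suc (Suc (Suc k))) * ee q j * (q^2 / ((1 - q)^2 * q ^ (2*k) * PP q k))) sums (PP q (Suc (Suc k)) * (q^2 / ((1 - q)^2 * q ^ (2*k) * PP q k)))"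
    by (intro sums_mult2 Tk[OF q])
  moreover have "WW q k j * (vv q k j)^2 = q ^ (j * Suc (Suc (Suc k))) * ee q j * (q^2 / ((1 - q)^2 * q ^ (2*k) * PP q k))" for j
  proof -
    have e1: "q ^ (j * Suc (Suc (Suc k))) = q ^ (j * Suc k) * (q ^ j * q ^ j)"
      by (simp add: power_add[symmetric] algebra_simps)
    have e2: "q ^ (2 * k) = q ^ k * q ^ k" by (simp add: power_add[symmetric] mult_2)
    have "\<And>A B E P a b :: real. P \<noteq> 0 \<Longrightarrow> b \<noteq> 0 \<Longrightarrow> A * E / P * (q * a / (1 - q) * (1 / b))^2 = A * (a * a) * E * (q^2 / ((1 - q)^2 * (b * b) * P))"
      using q by (simp add: field_simps power2_eq_square)
    then show ?thesis unfolding WW_def vv_def e1 e2 power_Suc using q PP_pos[OF q, of k] by simp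
  qed
  moreover have "PP q (Suc (Suc k)) * (q^2 / ((1 - q)^2 * q ^ (2*k) * PP q k)) = (q / (1 - q))^2 * ((1 / q) ^ (2 * k) - (q + q^2) * (1 / q) ^ k + q ^ 3)"
  proof -
    have e2: "q ^ (2 * k) = q ^ k * q ^ k" "(1/q) ^ (2 * k) = (1/q) ^ k * (1/q) ^ k" by (simp_all add: power_add[symmetric] mult_2)
    have e3: "(1/q) ^ k = 1 / q ^ k" by (simp add: power_divide)
    have "\<And>P b s :: real. P \<noteq> 0 \<Longrightarrow> b \<noteq> 0 \<Longrightarrow> s \<noteq> 0 \<Longrightarrow> P * (1 - q * b) * (1 - q * (q * b)) * (q^2 / (s^2 * (b * b) * P))
       = (q / s)^2 * (1 / b * (1 / b) - (q + q^2) * (1 / b) + q ^ 3)"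
      by (simp add: field_simps power2_eq_square power3_eq_cube)
    from this[of "PP q k" "q ^ k" "1 - q"] show ?thesis unfolding PP_Suc e2 e3 power_Suc using q PP_pos[OF q, of k] by (simp add: mult.assoc)
  qed
  ultimately show ?thesis by simp
qed

lemma Nt: "n \<ge> 1 \<Longrightarrow> qint q n * (q / (1 - q ^ n) * q ^ j) = q ^ Suc j / (1 - q)"
proof -
  assume n: "n \<ge> 1"
  have "q ^ n < 1" using q n by (simp add: power_less_one_iff)
  moreover have "\<And>u s::real. u \<noteq> 0 \<Longrightarrow> s \<noteq> 0 \<Longrightarrow> u / s * (q / u * q ^ j) = q * q ^ j / s"
    by (simp add: field_simps)
  ultimately show ?thesis unfolding qint_def using q by simp
qed

lemma inner_eq:
  assumes n: "n \<ge> 1" and sm: "summable (\<lambda>j. WW q k j * g ((vv q k j + a) / (qint q n + b)))"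
  shows "qint q n * jackson_int q (\<lambda>t. (1 / q ^ (k + 1)) * s_nk q n k t *
          g ((qint q n * t * (1 / q ^ k) + a) / (qint q n + b))) (q / (1 - q ^ n))
       = (\<Sum>j. WW q k j * g ((vv q k j + a) / (qint q n + b)))"
proof -
  have qn: "q ^ n < 1" using q n by (simp add: power_less_one_iff)
  have hterm: "(1 / q ^ (k + 1)) * s_nk q n k (q / (1 - q ^ n) * q ^ j) *
          g ((qint q n * (q / (1 - q ^ n) * q ^ j) * (1 / q ^ k) + a) / (qint q n + b)) * q ^ j
     = (1 / q) * (WW q k j * g ((vv q k j + a) / (qint q n + b)))" for j
  proof -
    have h1: "s_nk q n k (q / (1 - q ^ n) * q ^ j) = ee q j * (q ^ Suc j / (1 - q)) ^ k / qfact q k"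
      unfolding s_nk_def mult_minus_left Nt[OF n] ee_def ..
    have h2: "(qint q n * (q / (1 - q ^ n) * q ^ j) * (1 / q ^ k) + a) = vv q k j + a"
      unfolding Nt[OF n] vv_def ..
    have h3: "1 / q ^ (k + 1) * (ee q j * (q ^ Suc j / (1 - q)) ^ k / qfact q k) * q ^ j = (1 / q) * WW q k j"
      unfolding WW_def PP_qfact using q qfact_pos[OF q, of k]
      by (simp add: field_simps power_add power_mult_distrib power_divide power_mult[symmetric] mult.commute)
    have ac: "\<And>A S G w :: real. A * S * G * w = (A * S * w) * G" by (simp add: mult_ac)
    show ?thesis unfolding h1 h2 ac h3 by (simp only: mult.assoc)
  qed
  have "jackson_int q (\<lambda>t. (1 / q ^ (k + 1)) * s_nk q n k t *
          g ((qint q n * t * (1 / q ^ k) + a) / (qint q n + b))) (q / (1 - q ^ n))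
     = (1 - q) * (q / (1 - q ^ n)) * (\<Sum>j. (1 / q) * (WW q k j * g ((vv q k j + a) / (qint q n + b))))"
    unfolding jackson_int_def hterm ..
  also have "\<dots> = (1 - q) * (q / (1 - q ^ n)) * ((1 / q) * (\<Sum>j. WW q k j * g ((vv q k j + a) / (qint q n + b))))"
    by (simp only: suminf_mult[OF sm])
  finally have J: "jackson_int q (\<lambda>t. (1 / q ^ (k + 1)) * s_nk q n k t *
          g ((qint q n * t * (1 / q ^ k) + a) / (qint q n + b))) (q / (1 - q ^ n))
     = (1 - q) * (q / (1 - q ^ n)) * ((1 / q) * (\<Sum>j. WW q k j * g ((vv q k j + a) / (qint q n + b))))" .
  have "\<And>u s::real. u \<noteq> 0 \<Longrightarrow> s \<noteq> 0 \<Longrightarrow> u / s * (s * (q / u)) = q"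
    by (simp add: field_simps)
  then have NA: "qint q n * ((1 - q) * (q / (1 - q ^ n))) = q" unfolding qint_def using q qn by simp
  have gen: "\<And>N CA S::real. N * CA = q \<Longrightarrow> N * (CA * (1 / q * S)) = S"
    using q by (simp add: field_simps)
  show ?thesis unfolding J by (rule gen[OF NA])
qed

end



lemma modcont_props:
  fixes f :: "real \<Rightarrow> real"
  assumes bnd: "\<And>y. y \<ge> 0 \<Longrightarrow> \<bar>f y\<bar> \<le> B" and d: "d > 0"
  shows "0 \<le> modcont f d \<and> (\<forall>t y. t \<ge> 0 \<longrightarrow> y \<ge> 0 \<longrightarrow> \<bar>t - y\<bar> \<le> d \<longrightarrow> \<bar>f t - f y\<bar> \<le> modcont f d)"
proof -
  define S where "S = {\<bar>f t - f x\<bar> | t x. t \<ge> 0 \<and> x \<ge> 0 \<and> \<bar>t - x\<bar> \<le> d}"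
  have bdd: "bdd_above S"
    unfolding S_def bdd_above_def
  proof (intro exI[of _ "2 * B"] ballI)
    fix z assume "z \<in> {\<bar>f t - f x\<bar> | t x. t \<ge> 0 \<and> x \<ge> 0 \<and> \<bar>t - x\<bar> \<le> d}"
    then obtain t x where "z = \<bar>f t - f x\<bar>" "t \<ge> 0" "x \<ge> 0" by auto
    with bnd[of t] bnd[of x] show "z \<le> 2 * B" by linarith
  qed
  have up: "\<bar>f t - f y\<bar> \<le> modcont f d" if "t \<ge> 0" "y \<ge> 0" "\<bar>t - y\<bar> \<le> d" for t y
  proof -
    have "\<bar>f t - f y\<bar> \<in> S" unfolding S_def using that by blast
    then show ?thesis unfolding modcont_def S_def[symmetric] using bdd by (rule cSup_upper)
  qed
  moreover have "0 \<le> modcont f d" using up[of 0 0] d by simp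
  ultimately show ?thesis by blast
qed

lemma modcont_bound:
  fixes f :: "real \<Rightarrow> real"
  assumes bnd: "\<And>y. y \<ge> 0 \<Longrightarrow> \<bar>f y\<bar> \<le> B" and d: "d > 0" and t: "t \<ge> 0" and y: "y \<ge> 0"
  shows "\<bar>f t - f y\<bar> \<le> modcont f d * (1 + (t - y)^2 / d^2)"
proof -
  have mp0: "0 \<le> modcont f d \<and> (\<forall>t y. t \<ge> 0 \<longrightarrow> y \<ge> 0 \<longrightarrow> \<bar>t - y\<bar> \<le> d \<longrightarrow> \<bar>f t - f y\<bar> \<le> modcont f d)"
    using bnd d by (rule modcont_props)
  have mp: "0 \<le> modcont f d" "\<And>t y. t \<ge> 0 \<Longrightarrow> y \<ge> 0 \<Longrightarrow> \<bar>t - y\<bar> \<le> d \<Longrightarrow> \<bar>f t - f y\<bar> \<le> modcont f d"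
    using mp0 by auto
  define w where "w = modcont f d"
  have w0: "0 \<le> w" using mp(1) by (simp add: w_def)
  show ?thesis
  proof (cases "\<bar>t - y\<bar> \<le> d")
    case True
    have "\<bar>f t - f y\<bar> \<le> w" using mp(2)[OF t y True] by (simp add: w_def)
    also have "\<dots> \<le> w * (1 + (t - y)^2 / d^2)" using w0 by (simp add: mult_le_cancel_left1)
    finally show ?thesis by (simp add: w_def)
  next
    case False
    define l where "l = \<bar>t - y\<bar> / d"
    have l1: "l > 1" using False d by (simp add: l_def)
    define m where "m = nat \<lceil>l\<rceil>"
    have mge: "real m \<ge> l" unfolding m_def by linarith
    have mle: "real m < l + 1" unfolding m_def using l1 by linarith
    have m1: "real m > 0" using mge l1 by linarith
    define p where "p i = y + real i * (t - y) / real m" for i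
    have p0: "p 0 = y" and pm: "p m = t" using m1 by (simp_all add: p_def)
    have pnn: "p i \<ge> 0" if "i \<le> m" for i
    proof -
      have c: "0 \<le> real i / real m" "real i / real m \<le> 1" using that m1 by auto
      have "p i = (1 - real i / real m) * y + (real i / real m) * t" unfolding p_def using m1 by (simp add: field_simps)
      then show ?thesis using c t y by simp
    qed
    have step: "\<bar>f (p (Suc i)) - f (p i)\<bar> \<le> w" if "i < m" for i
    proof -
      have "p (Suc i) - p i = (t - y) / real m" unfolding p_def using m1 by (simp add: field_simps)
      then have "\<bar>p (Suc i) - p i\<bar> = \<bar>t - y\<bar> / real m" using m1 by (simp add: abs_divide)
      also have "\<dots> \<le> \<bar>t - y\<bar> / l" using mge l1 by (intro divide_left_mono) auto
      also have "\<dots> = d" using l1 d False by (simp add: l_def)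
      finally show ?thesis unfolding w_def using that by (intro mp(2) pnn) auto
    qed
    have "f t - f y = (\<Sum>i<m. f (p (Suc i)) - f (p i))"
      using sum_lessThan_telescope[of "\<lambda>i. f (p i)" m] by (simp add: p0 pm)
    then have "\<bar>f t - f y\<bar> \<le> (\<Sum>i<m. \<bar>f (p (Suc i)) - f (p i)\<bar>)"
      by (simp add: sum_abs)
    also have "\<dots> \<le> (\<Sum>i<m. w)" using step by (intro sum_mono) auto
    also have "\<dots> = real m * w" by simp
    also have "\<dots> \<le> (1 + l^2) * w"
    proof -
      have "l \<le> l^2" using l1 by (simp add: power2_eq_square)
      then have "real m \<le> 1 + l^2" using mle by linarith
      then show ?thesis using w0 by (intro mult_right_mono) auto
    qed
    also have "l^2 = (t - y)^2 / d^2" unfolding l_def by (simp add: power_divide)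
    finally show ?thesis by (simp add: w_def mult.commute)
  qed
qed



lemma bss_fin:
  fixes q N a Q x :: real
  assumes q: "q \<noteq> 0" and Q: "Q \<noteq> 0"
  shows "((q^2 * (1 + q) + N * (1 + q)^2 * x + N * (1 + q * N) * x^2 / q) + 2 * (a - x * Q) * (q + N * x) + (a - x * Q)^2) / Q^2
   = (N * (q * N + 1) / (q * Q^2) + 1 - 2 * N / Q) * x^2
   + ((N + q^2 * N - 2 * a * (Q - N) - 2 * q * (Q - N)) / Q^2) * x
   + (q^2 * (1 + q) + 2 * q * a + a^2) / Q^2"
  using q Q by (simp add: field_simps power2_eq_square)
lemma M1alg:
  fixes q N x s :: real
  assumes q: "q \<noteq> 0" "s \<noteq> 0" "s = 1 - q"
  shows "q / s * (1 + N * s * x / q) - q / s * q = q + N * x"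
proof -
  have "q / s * (1 + N * s * x / q) = q / s + N * x" using q(1,2) by (simp add: field_simps)
  moreover have "q / s - q / s * q = q / s * (1 - q)" by (simp add: right_diff_distrib)
  moreover have "q / s * (1 - q) = q / s * s" by (simp only: q(3))
  ultimately show ?thesis using q(2) by simp
qed
lemma M2alg:
  fixes q N x s :: real
  assumes q: "q \<noteq> 0" "s \<noteq> 0" "s = 1 - q"
  shows "(q / s)^2 * ((1 + N * s * x / q + N * s * x / q^2 * (1 + s * (1 + q * N) * x / q))
      - (q + q^2) * (1 + N * s * x / q) + q^3)
   = q^2 * (1 + q) + N * (1 + q)^2 * x + N * (1 + q * N) * x^2 / q"
proof -
  have A: "(1 + N * s * x / q + N * s * x / q^2 * (1 + s * (1 + q * N) * x / q))
      - (q + q^2) * (1 + N * s * x / q) + q^3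
      = s^2 * ((1 + q) + N * (1 + q)^2 * x / q^2 + N * (1 + q * N) * x^2 / q^3)"
    unfolding q(3) using q(1) by (simp add: field_simps power2_eq_square power3_eq_cube)
  have B: "(q / s)^2 * (s^2 * Z) = q^2 * Z" for Z
    using q by (simp add: power_divide)
  have C: "q^2 * ((1 + q) + N * (1 + q)^2 * x / q^2 + N * (1 + q * N) * x^2 / q^3) = q^2 * (1 + q) + N * (1 + q)^2 * x + N * (1 + q * N) * x^2 / q"
    using q(1) by (simp add: field_simps power2_eq_square power3_eq_cube)
  show ?thesis unfolding A B C ..
qed



lemma core:
  fixes f :: "real \<Rightarrow> real" and q x \<alpha> \<beta> B :: real and n :: nat
  assumes q: "0 < q" "q < 1" and n: "n \<ge> 1" and x: "0 \<le> x" and al: "0 \<le> \<alpha>" "\<alpha> \<le> \<beta>"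
    and bnd: "\<And>y. y \<ge> 0 \<Longrightarrow> \<bar>f y\<bar> \<le> B"
  shows "\<bar>BSS n \<alpha> \<beta> f q x - f x\<bar> \<le> 2 * modcont f (sqrt (delta_n q n \<alpha> \<beta> x))"
proof -
  obtain m where nm: "n = Suc m" using n by (cases n) auto
  define N where "N = qint q n"
  have N1: "N \<ge> 1" unfolding N_def by (rule qint_ge1[OF q n])
  define Qd where "Qd = N + \<beta>"
  have Qd: "Qd > 0" using N1 al unfolding Qd_def by linarith
  define s where "s = 1 - q"
  have s: "s \<noteq> 0" "s = 1 - q" using q by (auto simp: s_def)
  have Ns: "1 - q ^ n = N * s" unfolding N_def s_def using qint_mult[OF q(2), of n] by simp
  have Ns2: "1 - q ^ Suc n = s * (1 + q * N)"
  proof -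
    have "1 - q ^ Suc n = 1 - q * (1 - N * s)" using Ns by simp
    then show ?thesis unfolding s_def by (simp add: algebra_simps)
  qed
  have B0: "0 \<le> B" using bnd[of 0] by simp
  define u where "u k j = (vv q k j + \<alpha>) / Qd" for k j
  have vv_nn: "0 \<le> vv q k j" for k j unfolding vv_def using q by simp
  have u_nn: "0 \<le> u k j" for k j unfolding u_def using vv_nn[of k j] al Qd by simp
  define pk where "pk k = p_nk q n k x" for k
  have pk_nn: "0 \<le> pk k" for k unfolding pk_def by (rule p_nonneg[OF q x])
  have P0: "pk sums 1" unfolding pk_def nm by (rule S0[OF q x])
  have P1: "(\<lambda>k. (1 / q) ^ k * pk k) sums (1 + N * s * x / q)"
    using S1[OF q x, of m] unfolding pk_def nm[symmetric] Ns by simp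
  have P2: "(\<lambda>k. (1 / q) ^ (2 * k) * pk k) sums
     ((1 + N * s * x / q) + N * s * x / q ^ 2 * (1 + s * (1 + q * N) * x / q))"
    using S2[OF q x, of m] unfolding pk_def nm[symmetric] Ns Ns2 by simp

  have Wsm: "summable (\<lambda>j. WW q k j * f (u k j))" for k
  proof (rule summable_comparison_test)
    show "summable (\<lambda>j. B * WW q k j)" using I0[OF q, of k] by (intro summable_mult) (auto simp: sums_iff)
    show "\<exists>N. \<forall>j\<ge>N. norm (WW q k j * f (u k j)) \<le> B * WW q k j"
    proof (intro exI[of _ 0] allI impI)
      fix j :: nat
      have "WW q k j * \<bar>f (u k j)\<bar> \<le> WW q k j * B"
        using WW_pos[OF q, of k j] bnd[OF u_nn, of k j] by (intro mult_left_mono) auto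
      then show "norm (WW q k j * f (u k j)) \<le> B * WW q k j"
        using WW_pos[OF q, of k j] by (simp add: abs_mult mult.commute)
    qed
  qed
  define L where "L k = (\<Sum>j. WW q k j * f (u k j))" for k
  have Ls: "(\<lambda>j. WW q k j * f (u k j)) sums L k" for k unfolding L_def using Wsm by (rule summable_sums)
  have WB: "(\<lambda>j. B * WW q k j) sums (B * 1)" for k by (intro sums_mult I0[OF q])
  have WmB: "(\<lambda>j. - B * WW q k j) sums (- B * 1)" for k by (intro sums_mult I0[OF q])
  have L_bd: "\<bar>L k\<bar> \<le> B" for k
  proof -
    have "L k \<le> B * 1"
    proof (rule sums_le[OF _ Ls WB])
      fix j
      have "f (u k j) \<le> B" using bnd[OF u_nn, of k j] by linarith
      then show "WW q k j * f (u k j) \<le> B * WW q k j"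
        using WW_pos[OF q, of k j] by (simp add: mult.commute mult_left_mono)
    qed
    moreover have "- B * 1 \<le> L k"
    proof (rule sums_le[OF _ WmB Ls])
      fix j
      have "- B \<le> f (u k j)" using bnd[OF u_nn, of k j] by linarith
      then have "WW q k j * (- B) \<le> WW q k j * f (u k j)"
        using WW_pos[OF q, of k j] by (intro mult_left_mono) auto
      then show "- B * WW q k j \<le> WW q k j * f (u k j)" by (simp add: mult.commute)
    qed
    ultimately show ?thesis by simp
  qed

  define c where "c = \<alpha> - x * Qd"
  define m1 where "m1 k = q / (1 - q) * ((1 / q) ^ k - q)" for k
  define m2 where "m2 k = (q / (1 - q))^2 * ((1 / q) ^ (2 * k) - (q + q^2) * (1 / q) ^ k + q ^ 3)" for k
  define E where "E k = (m2 k + 2 * c * m1 k + c^2) / Qd^2" for k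
  have Es: "(\<lambda>j. WW q k j * (u k j - x)^2) sums E k" for k
  proof -
    have "(\<lambda>j. (WW q k j * (vv q k j)^2 + 2 * c * (WW q k j * vv q k j) + c^2 * WW q k j) / Qd^2)
        sums ((m2 k + 2 * c * m1 k + c^2 * 1) / Qd^2)"
      unfolding m1_def m2_def by (intro sums_divide sums_add sums_mult I0[OF q] I1[OF q] I2[OF q])
    moreover have "WW q k j * (u k j - x)^2 = (WW q k j * (vv q k j)^2 + 2 * c * (WW q k j * vv q k j) + c^2 * WW q k j) / Qd^2" for j
    proof -
      have "u k j - x = (vv q k j + c) / Qd" unfolding u_def c_def using Qd by (simp add: field_simps)
      then show ?thesis by (simp add: power2_eq_square field_simps)
    qed
    ultimately show ?thesis unfolding E_def by simp
  qed
  define D where "D = delta_n q n \<alpha> \<beta> x"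
  have Pm1: "(\<lambda>k. pk k * m1 k) sums (q + N * x)"
  proof -
    have "(\<lambda>k. q / s * ((1 / q) ^ k * pk k) - q / s * q * pk k) sums (q / s * (1 + N * s * x / q) - q / s * q * 1)"
      by (intro sums_diff sums_mult P0 P1)
    moreover have "pk k * m1 k = q / s * ((1 / q) ^ k * pk k) - q / s * q * pk k" for k
      unfolding m1_def s_def by (simp add: algebra_simps)
    ultimately show ?thesis using M1alg[OF _ s, of N x] q by simp
  qed
  have Pm2: "(\<lambda>k. pk k * m2 k) sums (q^2 * (1 + q) + N * (1 + q)^2 * x + N * (1 + q * N) * x^2 / q)"
  proof -
    have "(\<lambda>k. (q / s)^2 * ((1 / q) ^ (2 * k) * pk k) - (q / s)^2 * (q + q^2) * ((1 / q) ^ k * pk k) + (q / s)^2 * q^3 * pk k)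
       sums ((q / s)^2 * ((1 + N * s * x / q) + N * s * x / q ^ 2 * (1 + s * (1 + q * N) * x / q))
           - (q / s)^2 * (q + q^2) * (1 + N * s * x / q) + (q / s)^2 * q^3 * 1)"
      by (intro sums_diff sums_add sums_mult P0 P1 P2)
    moreover have "pk k * m2 k = (q / s)^2 * ((1 / q) ^ (2 * k) * pk k) - (q / s)^2 * (q + q^2) * ((1 / q) ^ k * pk k) + (q / s)^2 * q^3 * pk k" for k
      unfolding m2_def s_def by (simp add: algebra_simps)
    moreover have "(q / s)^2 * ((1 + N * s * x / q) + N * s * x / q ^ 2 * (1 + s * (1 + q * N) * x / q))
           - (q / s)^2 * (q + q^2) * (1 + N * s * x / q) + (q / s)^2 * q^3 * 1
         = q^2 * (1 + q) + N * (1 + q)^2 * x + N * (1 + q * N) * x^2 / q"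
    proof -
      have "(q / s)^2 * ((1 + N * s * x / q) + N * s * x / q ^ 2 * (1 + s * (1 + q * N) * x / q))
           - (q / s)^2 * (q + q^2) * (1 + N * s * x / q) + (q / s)^2 * q^3 * 1
         = (q / s)^2 * (((1 + N * s * x / q) + N * s * x / q ^ 2 * (1 + s * (1 + q * N) * x / q))
           - (q + q^2) * (1 + N * s * x / q) + q^3)"
        by (simp only: ring_distribs mult.assoc mult_1_right)
      also have "\<dots> = q^2 * (1 + q) + N * (1 + q)^2 * x + N * (1 + q * N) * x^2 / q"
        using M2alg[OF _ s, of N x] q by simp
      finally show ?thesis .
    qed
    ultimately show ?thesis by simp
  qed
  have Esum: "(\<lambda>k. pk k * E k) sums D"
  proof -
    have "(\<lambda>k. (pk k * m2 k + 2 * c * (pk k * m1 k) + c^2 * pk k) / Qd^2) sums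
        (((q^2 * (1 + q) + N * (1 + q)^2 * x + N * (1 + q * N) * x^2 / q) + 2 * c * (q + N * x) + c^2 * 1) / Qd^2)"
      by (intro sums_divide sums_add sums_mult Pm1 Pm2 P0)
    moreover have "pk k * E k = (pk k * m2 k + 2 * c * (pk k * m1 k) + c^2 * pk k) / Qd^2" for k
      unfolding E_def by (simp add: algebra_simps add_divide_distrib)
    moreover have "((q^2 * (1 + q) + N * (1 + q)^2 * x + N * (1 + q * N) * x^2 / q) + 2 * c * (q + N * x) + c^2 * 1) / Qd^2 = D"
    proof -
      have b: "\<beta> = Qd - N" unfolding Qd_def by simp
      have "D = (N * (q * N + 1) / (q * Qd^2) + 1 - 2 * N / Qd) * x^2
         + ((N + q^2 * N - 2 * \<alpha> * (Qd - N) - 2 * q * (Qd - N)) / Qd^2) * x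
         + (q^2 * (1 + q) + 2 * q * \<alpha> + \<alpha>^2) / Qd^2"
        unfolding D_def delta_n_def N_def[symmetric] Qd_def[symmetric] b[symmetric] ..
      also have "\<dots> = ((q^2 * (1 + q) + N * (1 + q)^2 * x + N * (1 + q * N) * x^2 / q) + 2 * (\<alpha> - x * Qd) * (q + N * x) + (\<alpha> - x * Qd)^2) / Qd^2"
        using bss_fin[of q Qd N x \<alpha>] q Qd by simp
      finally show ?thesis unfolding c_def by simp
    qed
    ultimately show ?thesis by simp
  qed

  have E_nn: "0 \<le> E k" for k
  proof (rule sums_le[OF _ sums_zero Es])
    fix j show "0 \<le> WW q k j * (u k j - x)^2" using WW_pos[OF q, of k j] by simp
  qed
  have E0: "0 < E 0"
  proof -
    let ?g = "\<lambda>j. WW q 0 j * (u 0 j - x)^2"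
    have g_nn: "0 \<le> ?g j" for j using WW_pos[OF q, of 0 j] by simp
    have "sum ?g {0, 1} \<le> suminf ?g"
      by (rule sum_le_suminf) (use Es[of 0] g_nn in \<open>auto simp: sums_iff\<close>)
    also have "suminf ?g = E 0" using Es[of 0] by (simp add: sums_iff)
    finally have le: "?g 0 + ?g 1 \<le> E 0" by simp
    have "vv q 0 0 \<noteq> vv q 0 1" unfolding vv_def using q by (simp add: field_simps)
    then have "u 0 0 \<noteq> u 0 1" unfolding u_def using Qd by (auto simp: divide_cancel_right)
    then have "u 0 0 - x \<noteq> 0 \<or> u 0 1 - x \<noteq> 0" by auto
    then have "0 < ?g 0 \<or> 0 < ?g 1" using WW_pos[OF q, of 0 0] WW_pos[OF q, of 0 1] by auto
    then show ?thesis using le g_nn[of 0] g_nn[of 1] by linarith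
  qed
  have pk0: "0 < pk 0"
    unfolding pk_def nm p_zero[OF q x] using qpow1_pos[OF q(1) x, of "Suc m"] by simp
  have Dpos: "0 < D"
  proof -
    have nn: "0 \<le> pk k * E k" for k using pk_nn E_nn by simp
    have "sum (\<lambda>k. pk k * E k) {0} \<le> suminf (\<lambda>k. pk k * E k)"
      by (rule sum_le_suminf) (use Esum nn in \<open>auto simp: sums_iff\<close>)
    then have "pk 0 * E 0 \<le> D" using Esum by (simp add: sums_iff)
    moreover have "0 < pk 0 * E 0" using pk0 E0 by simp
    ultimately show ?thesis by linarith
  qed

  define d where "d = sqrt D"
  have d: "d > 0" "d^2 = D" using Dpos by (auto simp: d_def)
  define w where "w = modcont f d"
  have key: "\<bar>f (u k j) - f x\<bar> \<le> w + (w / D) * (u k j - x)^2" for k j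
  proof -
    have "\<bar>f (u k j) - f x\<bar> \<le> modcont f d * (1 + (u k j - x)^2 / d^2)"
      by (rule modcont_bound[OF bnd d(1) u_nn x])
    then show ?thesis unfolding w_def d(2) by (simp add: algebra_simps)
  qed
  have w0: "0 \<le> w" unfolding w_def using modcont_props[of f B d, OF bnd d(1)] by blast
  have Ub: "(\<lambda>j. (f x + w) * WW q k j + (w / D) * (WW q k j * (u k j - x)^2)) sums ((f x + w) * 1 + (w / D) * E k)" for k
    by (intro sums_add sums_mult I0[OF q] Es)
  have Lb: "(\<lambda>j. (f x - w) * WW q k j - (w / D) * (WW q k j * (u k j - x)^2)) sums ((f x - w) * 1 - (w / D) * E k)" for k
    by (intro sums_diff sums_mult I0[OF q] Es)
  have Lup: "L k \<le> f x + w + (w / D) * E k" for k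
  proof -
    have "L k \<le> (f x + w) * 1 + (w / D) * E k"
    proof (rule sums_le[OF _ Ls Ub])
      fix j
      have "f (u k j) \<le> f x + w + (w / D) * (u k j - x)^2" using key[of k j] by linarith
      then have "WW q k j * f (u k j) \<le> WW q k j * (f x + w + (w / D) * (u k j - x)^2)"
        using WW_pos[OF q, of k j] by (intro mult_left_mono) auto
      then show "WW q k j * f (u k j) \<le> (f x + w) * WW q k j + (w / D) * (WW q k j * (u k j - x)^2)"
        by (simp add: algebra_simps)
    qed
    then show ?thesis by simp
  qed
  have Llo: "f x - w - (w / D) * E k \<le> L k" for k
  proof -
    have "(f x - w) * 1 - (w / D) * E k \<le> L k"
    proof (rule sums_le[OF _ Lb Ls])
      fix j
      have "f x - w - (w / D) * (u k j - x)^2 \<le> f (u k j)" using key[of k j] by linarith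
      then have "WW q k j * (f x - w - (w / D) * (u k j - x)^2) \<le> WW q k j * f (u k j)"
        using WW_pos[OF q, of k j] by (intro mult_left_mono) auto
      then show "(f x - w) * WW q k j - (w / D) * (WW q k j * (u k j - x)^2) \<le> WW q k j * f (u k j)"
        by (simp add: algebra_simps)
    qed
    then show ?thesis by simp
  qed

  have pLsm: "summable (\<lambda>k. pk k * L k)"
  proof (rule summable_comparison_test)
    show "summable (\<lambda>k. B * pk k)" using P0 by (intro summable_mult) (auto simp: sums_iff)
    show "\<exists>N. \<forall>k\<ge>N. norm (pk k * L k) \<le> B * pk k"
    proof (intro exI[of _ 0] allI impI)
      fix k :: nat
      have "pk k * \<bar>L k\<bar> \<le> pk k * B" using pk_nn[of k] L_bd[of k] by (intro mult_left_mono) auto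
      then show "norm (pk k * L k) \<le> B * pk k" using pk_nn[of k] by (simp add: abs_mult mult.commute)
    qed
  qed
  define BL where "BL = (\<Sum>k. pk k * L k)"
  have BLs: "(\<lambda>k. pk k * L k) sums BL" unfolding BL_def using pLsm by (rule summable_sums)
  have BSS_eq: "BSS n \<alpha> \<beta> f q x = BL"
  proof -
    have J: "N * jackson_int q (\<lambda>t. (1 / q ^ (k + 1)) * s_nk q n k t *
          f ((qint q n * t * (1 / q ^ k) + \<alpha>) / (qint q n + \<beta>))) (q / (1 - q ^ n)) = L k" for k
      unfolding N_def L_def u_def Qd_def N_def by (rule inner_eq[OF q n]) (use Wsm[of k] in \<open>simp add: u_def Qd_def N_def\<close>)
    have "(\<lambda>k. pk k * jackson_int q (\<lambda>t. (1 / q ^ (k + 1)) * s_nk q n k t *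
          f ((qint q n * t * (1 / q ^ k) + \<alpha>) / (qint q n + \<beta>))) (q / (1 - q ^ n)))
        = (\<lambda>k. (1 / N) * (pk k * L k))"
    proof
      fix k
      show "pk k * jackson_int q (\<lambda>t. (1 / q ^ (k + 1)) * s_nk q n k t *
          f ((qint q n * t * (1 / q ^ k) + \<alpha>) / (qint q n + \<beta>))) (q / (1 - q ^ n)) = (1 / N) * (pk k * L k)"
        using J[of k, symmetric] N1 by simp
    qed
    moreover have "(\<lambda>k. (1 / N) * (pk k * L k)) sums ((1 / N) * BL)" by (intro sums_mult BLs)
    ultimately have "(\<Sum>k. pk k * jackson_int q (\<lambda>t. (1 / q ^ (k + 1)) * s_nk q n k t *
          f ((qint q n * t * (1 / q ^ k) + \<alpha>) / (qint q n + \<beta>))) (q / (1 - q ^ n))) = (1 / N) * BL"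
      by (simp add: sums_iff)
    then show ?thesis unfolding BSS_def pk_def N_def[symmetric] using N1 by simp
  qed
  have up: "BL \<le> f x + 2 * w"
  proof -
    have U: "(\<lambda>k. (f x + w) * pk k + (w / D) * (pk k * E k)) sums ((f x + w) * 1 + (w / D) * D)"
      by (intro sums_add sums_mult P0 Esum)
    have le: "pk k * L k \<le> (f x + w) * pk k + (w / D) * (pk k * E k)" for k
    proof -
      have "pk k * L k \<le> pk k * (f x + w + (w / D) * E k)" using pk_nn[of k] Lup[of k] by (intro mult_left_mono) auto
      then show ?thesis by (simp add: algebra_simps)
    qed
    have "BL \<le> (f x + w) * 1 + (w / D) * D" using sums_le[OF le BLs U] .
    then show ?thesis using Dpos by simp
  qed
  have lo: "f x - 2 * w \<le> BL"
  proof -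
    have U: "(\<lambda>k. (f x - w) * pk k - (w / D) * (pk k * E k)) sums ((f x - w) * 1 - (w / D) * D)"
      by (intro sums_diff sums_mult P0 Esum)
    have le: "(f x - w) * pk k - (w / D) * (pk k * E k) \<le> pk k * L k" for k
    proof -
      have "pk k * (f x - w - (w / D) * E k) \<le> pk k * L k" using pk_nn[of k] Llo[of k] by (intro mult_left_mono) auto
      then show ?thesis by (simp add: algebra_simps)
    qed
    have "(f x - w) * 1 - (w / D) * D \<le> BL" using sums_le[OF le U BLs] .
    then show ?thesis using Dpos by simp
  qed
  show ?thesis unfolding BSS_eq using up lo unfolding w_def d_def D_def by linarith
qed



theorem mainTheorem3:
  fixes \<alpha> \<beta> a :: real and q :: "nat \<Rightarrow> real" and f :: "real \<Rightarrow> real"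
  assumes "0 \<le> \<alpha>" and "\<alpha> \<le> \<beta>"
    and "\<And>n. 0 < q n \<and> q n < 1"
    and "st_lim q 1"
    and "st_lim (\<lambda>n. q n ^ n) a" and "a < 1"
    and "st_lim (\<lambda>n. 1 / qint (q n) n) 0"
    and "mono_on {0..} f" and "bounded (f ` {0..})" and "continuous_on {0..} f"
  shows "\<forall>x\<ge>0. \<forall>n\<ge>1.
     \<bar>BSS n \<alpha> \<beta> f (q n) x - f x\<bar> \<le> 2 * modcont f (sqrt (delta_n (q n) n \<alpha> \<beta> x))"
proof (intro allI impI)
  fix x :: real and n :: nat
  assume x: "x \<ge> 0" and n: "n \<ge> 1"
  obtain B where B: "\<forall>y\<in>f ` {0..}. norm y \<le> B" using assms(9) by (auto simp: bounded_iff)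
  have bnd: "\<And>y. y \<ge> 0 \<Longrightarrow> \<bar>f y\<bar> \<le> B" using B by auto
  have q: "0 < q n" "q n < 1" using assms(3) by auto
  show "\<bar>BSS n \<alpha> \<beta> f (q n) x - f x\<bar> \<le> 2 * modcont f (sqrt (delta_n (q n) n \<alpha> \<beta> x))"
    by (rule core[OF q n x assms(1,2) bnd])
qed

end
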